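(* Let $\beta\ge0$, $B>0$ and $\epsilon\in(0,1/5)$. There is a constant $C>0$ depending only on $\epsilon,\beta,B$ such that for all $n\ge C$ and all $a,b$ with $n^{-2\epsilon/5}<a<b\le B$, $$Z'_{a,b}:=\int_{\Gamma_{a,b}}e^{\beta n^{-1}S_4(f)}\,df\ \le\ \exp\Big(nL(a,b)+\frac{Cn^{4/5+\epsilon}}{b-a}\Big).$$
   Context: Let $V$ be a finite set with $n=|V|$ and $df$ Lebesgue measure on $\mathbb{C}^V\cong\mathbb{R}^{2n}$. For $f\in\mathbb{C}^V$ and $k\ge2$, $S_k(f)=\sum_{x\in V}|f_x|^k$. For $0<a<b$, $$\Gamma_{a,b}=\{f\in\mathbb{C}^V:\ a^2n^2(1-n^{-1/5})\le S_4(f)\le a^2n^2(1+n^{-1/5}),\ bn(1-n^{-1/5})\le S_2(f)\le bn(1+n^{-1/5})\}.$$ Define $L(a,b)=\beta a^2+\log(b-a)+\log\pi+1$. *)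

theory Defs
  imports "HOL-Analysis.Analysis"
begin

definition Sk :: "nat \<Rightarrow> 'v set \<Rightarrow> ('v \<Rightarrow> complex) \<Rightarrow> real" where
  "Sk k V f = (\<Sum>x\<in>V. cmod (f x) ^ k)"

definition Gamma :: "'v set \<Rightarrow> real \<Rightarrow> real \<Rightarrow> ('v \<Rightarrow> complex) set" where
  "Gamma V a b = (let n = real (card V) in
     {f \<in> PiE V (\<lambda>_. UNIV).
        a\<^sup>2 * n\<^sup>2 * (1 - n powr (-1/5)) \<le> Sk 4 V f \<and>
        Sk 4 V f \<le> a\<^sup>2 * n\<^sup>2 * (1 + n powr (-1/5)) \<and>
        b * n * (1 - n powr (-1/5)) \<le> Sk 2 V f \<and>
        Sk 2 V f \<le> b * n * (1 + n powr (-1/5))})"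

definition L :: "real \<Rightarrow> real \<Rightarrow> real \<Rightarrow> real" where
  "L \<beta> a b = \<beta> * a\<^sup>2 + ln (b - a) + ln pi + 1"

definition lebC :: "'v set \<Rightarrow> ('v \<Rightarrow> complex) measure" where
  "lebC V = PiM V (\<lambda>_. lborel)"

end

theory Submission
  imports Defs "HOL-Probability.Distributions"
begin


lemma disk_measure: "r \<ge> 0 \<Longrightarrow> emeasure lborel (cball (0::complex) r) = ennreal (pi * r^2)"
proof -
  have "unit_ball_vol (real (2*1)) = pi" by (subst unit_ball_vol_even) simp
  then show "r \<ge> 0 \<Longrightarrow> ?thesis" by (simp add: emeasure_cball)
qed

lemma gauss_real:
  assumes t: "t > 0"
  shows "(\<integral>\<^sup>+x. ennreal (exp (- t * x\<^sup>2)) \<partial>lborel) = ennreal (sqrt (pi / t))"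
proof -
  define \<sigma> where "\<sigma> = sqrt (1 / (2*t))"
  have s: "\<sigma> > 0" "\<sigma>\<^sup>2 = 1/(2*t)" using t by (auto simp: \<sigma>_def)
  have eq: "exp (- t * x\<^sup>2) = sqrt (pi / t) * normal_density 0 \<sigma> x" for x
  proof -
    have 1: "2 * pi * \<sigma>\<^sup>2 = pi / t" using s t by (simp add: field_simps)
    have 2: "- (x - 0)\<^sup>2 / (2 * \<sigma>\<^sup>2) = - t * x\<^sup>2" using s t by (simp add: field_simps)
    have 3: "sqrt (pi/t) > 0" using t by simp
    show ?thesis unfolding normal_density_def 1 2 using 3 t by simp
  qed
  have "(\<integral>\<^sup>+x. ennreal (exp (- t * x\<^sup>2)) \<partial>lborel) = (\<integral>\<^sup>+x. ennreal (sqrt (pi/t)) * ennreal (normal_density 0 \<sigma> x) \<partial>lborel)"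
    by (intro nn_integral_cong) (simp only: eq, rule ennreal_mult, simp_all add: t less_imp_le)
  also have "\<dots> = ennreal (sqrt (pi/t)) * (\<integral>\<^sup>+x. ennreal (normal_density 0 \<sigma> x) \<partial>lborel)"
    by (rule nn_integral_cmult) simp
  also have "(\<integral>\<^sup>+x. ennreal (normal_density 0 \<sigma> x) \<partial>lborel) = 1"
    using s(1) by (subst nn_integral_eq_integral) (auto intro: integrable_normal_density integral_normal_density)
  finally show ?thesis by simp
qed

interpretation lbpsf: product_sigma_finite "\<lambda>_. lborel :: real measure"
  by unfold_locales

lemma gauss_complex:
  assumes t: "t > 0"
  shows "(\<integral>\<^sup>+z. ennreal (exp (- t * (cmod z)\<^sup>2)) \<partial>(lborel::complex measure)) = ennreal (pi / t)"
proof -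
  have "(\<integral>\<^sup>+z. ennreal (exp (- t * (cmod z)\<^sup>2)) \<partial>(lborel::complex measure))
     = (\<integral>\<^sup>+z. ennreal (exp (- t * (cmod z)\<^sup>2)) \<partial>(distr (\<Pi>\<^sub>M b\<in>Basis. lborel) borel (\<lambda>f. \<Sum>b\<in>Basis. f b *\<^sub>R b)))"
    by (subst lborel_eq) (rule refl)
  also have "\<dots> = (\<integral>\<^sup>+f. ennreal (exp (- t * (cmod (\<Sum>b\<in>Basis. f b *\<^sub>R b :: complex))\<^sup>2)) \<partial>(\<Pi>\<^sub>M b\<in>Basis. lborel))"
    by (subst nn_integral_distr) auto
  also have "\<dots> = (\<integral>\<^sup>+f. (\<Prod>b\<in>(Basis::complex set). ennreal (exp (- t * (f b)\<^sup>2))) \<partial>(\<Pi>\<^sub>M b\<in>Basis. lborel))"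
  proof (intro nn_integral_cong)
    fix f :: "complex \<Rightarrow> real"
    have "(cmod (\<Sum>b\<in>Basis. f b *\<^sub>R b :: complex))\<^sup>2 = (f 1)\<^sup>2 + (f \<i>)\<^sup>2"
      by (simp add: Basis_complex_def cmod_def complex_eq_iff scaleR_conv_of_real)
    then show "ennreal (exp (- t * (cmod (\<Sum>b\<in>Basis. f b *\<^sub>R b :: complex))\<^sup>2)) = (\<Prod>b\<in>(Basis::complex set). ennreal (exp (- t * (f b)\<^sup>2)))"
      by (simp add: Basis_complex_def prod_ennreal[symmetric] exp_add[symmetric] algebra_simps ennreal_mult[symmetric])
  qed
  also have "\<dots> = (\<Prod>b\<in>(Basis::complex set). (\<integral>\<^sup>+x. ennreal (exp (- t * x\<^sup>2)) \<partial>lborel))"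
    by (rule lbpsf.product_nn_integral_prod) auto
  also have "\<dots> = ennreal (sqrt (pi/t)) ^ 2"
    using gauss_real[OF t] by simp
  also have "\<dots> = ennreal (pi / t)"
  proof -
    have "ennreal (sqrt (pi/t)) ^ 2 = ennreal (sqrt (pi/t) ^ 2)" by (rule ennreal_power) (use t in simp)
    also have "sqrt (pi/t) ^ 2 = pi / t" using t by (simp add: less_imp_le)
    finally show ?thesis .
  qed
  finally show ?thesis .
qed

definition wt :: "real \<Rightarrow> real \<Rightarrow> real \<Rightarrow> complex \<Rightarrow> real" where
  "wt t c M z = exp (- t * (cmod z)\<^sup>2) + c * indicator (cball 0 (sqrt M)) z"

lemma wt_nonneg: "c \<ge> 0 \<Longrightarrow> wt t c M z \<ge> 0"
  by (simp add: wt_def)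

lemma cball_borel[measurable]: "cball (0::complex) r \<in> sets borel"
  by (simp add: borel_closed)

lemma wt_measurable[measurable]: "wt t c M \<in> borel_measurable borel"
  unfolding wt_def by measurable

lemma wt_integral:
  assumes t: "t > 0" and c: "c \<ge> 0" and M: "M \<ge> 0"
  shows "(\<integral>\<^sup>+z. ennreal (wt t c M z) \<partial>(lborel::complex measure)) = ennreal (pi / t + c * pi * M)"
proof -
  have "(\<integral>\<^sup>+z. ennreal (wt t c M z) \<partial>(lborel::complex measure))
     = (\<integral>\<^sup>+z. ennreal (exp (- t * (cmod z)\<^sup>2)) + ennreal c * indicator (cball 0 (sqrt M)) z \<partial>lborel)"
  proof (intro nn_integral_cong)
    fix z :: complex
    have "ennreal (wt t c M z) = ennreal (exp (- t * (cmod z)\<^sup>2)) + ennreal (c * indicator (cball 0 (sqrt M)) z)"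
      unfolding wt_def using c by (intro ennreal_plus) auto
    also have "ennreal (c * indicator (cball 0 (sqrt M)) z) = ennreal c * indicator (cball 0 (sqrt M)) z"
      by (simp add: indicator_def)
    finally show "ennreal (wt t c M z) = ennreal (exp (- t * (cmod z)\<^sup>2)) + ennreal c * indicator (cball 0 (sqrt M)) z" .
  qed
  also have "\<dots> = (\<integral>\<^sup>+z. ennreal (exp (- t * (cmod z)\<^sup>2)) \<partial>lborel) + (\<integral>\<^sup>+z. ennreal c * indicator (cball 0 (sqrt M)) z \<partial>(lborel::complex measure))"
    by (rule nn_integral_add) auto
  also have "(\<integral>\<^sup>+z. ennreal c * indicator (cball 0 (sqrt M)) z \<partial>(lborel::complex measure)) = ennreal c * emeasure lborel (cball (0::complex) (sqrt M))"
    by (subst nn_integral_cmult) auto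
  also have "emeasure lborel (cball (0::complex) (sqrt M)) = ennreal (pi * M)"
    using M by (simp add: disk_measure)
  also have "ennreal c * ennreal (pi * M) = ennreal (c * pi * M)"
    using c M by (subst ennreal_mult[symmetric]) (auto simp: mult.assoc)
  also have "(\<integral>\<^sup>+z. ennreal (exp (- t * (cmod z)\<^sup>2)) \<partial>(lborel::complex measure)) = ennreal (pi / t)"
    by (rule gauss_complex[OF t])
  also have "ennreal (pi / t) + ennreal (c * pi * M) = ennreal (pi / t + c * pi * M)"
    using t c M by (intro ennreal_plus[symmetric]) auto
  finally show ?thesis .
qed

lemma prod_integral:
  assumes "finite V" and t: "t > 0" and c: "c \<ge> 0" and M: "M \<ge> 0"
  shows "(\<integral>\<^sup>+f. (\<Prod>y\<in>V. ennreal (wt t c M (f y))) \<partial>lebC V) = ennreal ((pi / t + c * pi * M) ^ card V)"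
proof -
  interpret cpsf: product_sigma_finite "\<lambda>_. lborel :: complex measure"
    by unfold_locales
  have "(\<integral>\<^sup>+f. (\<Prod>y\<in>V. ennreal (wt t c M (f y))) \<partial>lebC V) = (\<Prod>y\<in>V. (\<integral>\<^sup>+z. ennreal (wt t c M z) \<partial>(lborel::complex measure)))"
    unfolding lebC_def by (rule cpsf.product_nn_integral_prod) (auto simp: assms)
  also have "\<dots> = ennreal (pi / t + c * pi * M) ^ card V"
    using assms by (simp add: wt_integral)
  also have "\<dots> = ennreal ((pi / t + c * pi * M) ^ card V)"
    using assms by (intro ennreal_power) simp
  finally show ?thesis .
qed

lemma weight_lower:
  fixes f :: "'v \<Rightarrow> complex"
  assumes V: "finite V" and t: "t \<ge> 0" and lam: "la \<ge> 0"
    and Mb: "\<forall>y\<in>V. (cmod (f y))\<^sup>2 \<le> M"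
    and kb: "real (card {y\<in>V. T < (cmod (f y))\<^sup>2}) \<le> k"
    and Rb: "(\<Sum>y\<in>{y\<in>V. \<not> T < (cmod (f y))\<^sup>2}. (cmod (f y))\<^sup>2) \<le> R"
  shows "exp (- la * k - t * R) \<le> (\<Prod>y\<in>V. wt t (exp (-la)) M (f y))"
proof -
  define Bs where "Bs = {y\<in>V. T < (cmod (f y))\<^sup>2}"
  define Ss where "Ss = {y\<in>V. \<not> T < (cmod (f y))\<^sup>2}"
  have fin: "finite Bs" "finite Ss" using V by (auto simp: Bs_def Ss_def)
  have VU: "V = Bs \<union> Ss" "Bs \<inter> Ss = {}" by (auto simp: Bs_def Ss_def)
  have "exp (- la * k) \<le> exp (- la * real (card Bs))"
    using kb lam by (simp add: Bs_def mult_left_mono)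
  also have "exp (- la * real (card Bs)) = (\<Prod>y\<in>Bs. exp (-la))"
    by (simp add: exp_of_nat_mult[symmetric] mult.commute)
  also have "\<dots> \<le> (\<Prod>y\<in>Bs. wt t (exp (-la)) M (f y))"
  proof (rule prod_mono)
    fix y assume "y \<in> Bs"
    then have "(cmod (f y))\<^sup>2 \<le> M" using Mb by (auto simp: Bs_def)
    then have "f y \<in> cball 0 (sqrt M)" by (simp add: real_le_rsqrt)
    then show "0 \<le> exp (-la) \<and> exp (-la) \<le> wt t (exp (-la)) M (f y)"
      by (simp add: wt_def)
  qed
  finally have 1: "exp (- la * k) \<le> (\<Prod>y\<in>Bs. wt t (exp (-la)) M (f y))" .
  have "exp (- t * R) \<le> exp (- t * (\<Sum>y\<in>Ss. (cmod (f y))\<^sup>2))"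
    using Rb t by (simp add: Ss_def mult_left_mono)
  also have "\<dots> = (\<Prod>y\<in>Ss. exp (- t * (cmod (f y))\<^sup>2))"
    using fin by (simp add: exp_sum[symmetric] sum_distrib_left)
  also have "\<dots> \<le> (\<Prod>y\<in>Ss. wt t (exp (-la)) M (f y))"
    by (rule prod_mono) (simp add: wt_def)
  finally have 2: "exp (- t * R) \<le> (\<Prod>y\<in>Ss. wt t (exp (-la)) M (f y))" .
  have "exp (- la * k - t * R) = exp (- la * k) * exp (- t * R)" by (simp add: exp_diff exp_minus field_simps)
  also have "\<dots> \<le> (\<Prod>y\<in>Bs. wt t (exp (-la)) M (f y)) * (\<Prod>y\<in>Ss. wt t (exp (-la)) M (f y))"
    by (rule mult_mono[OF 1 2]) (auto intro!: prod_nonneg wt_nonneg)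
  also have "\<dots> = (\<Prod>y\<in>V. wt t (exp (-la)) M (f y))"
    using fin VU by (simp add: prod.union_disjoint)
  finally show ?thesis .
qed

lemma pow4: "(x::real)^4 = x\<^sup>2 * x\<^sup>2"
  by (simp add: power4_eq_xxxx power2_eq_square)

lemma split_facts:
  fixes f :: "'v \<Rightarrow> complex"
  assumes V: "finite V" and T: "T > 0"
  defines "s \<equiv> (\<Sum>y\<in>{y\<in>V. T < (cmod (f y))\<^sup>2}. (cmod (f y))\<^sup>2)"
    and "r \<equiv> (\<Sum>y\<in>{y\<in>V. \<not> T < (cmod (f y))\<^sup>2}. (cmod (f y))\<^sup>2)"
  shows "Sk 2 V f = s + r" "Sk 4 V f \<le> s\<^sup>2 + T * r" "T * real (card {y\<in>V. T < (cmod (f y))\<^sup>2}) \<le> s"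
    "0 \<le> s" "0 \<le> r" "\<forall>y\<in>V. (cmod (f y))\<^sup>2 \<le> Sk 2 V f"
proof -
  define Bs where "Bs = {y\<in>V. T < (cmod (f y))\<^sup>2}"
  define Ss where "Ss = {y\<in>V. \<not> T < (cmod (f y))\<^sup>2}"
  have fin: "finite Bs" "finite Ss" using V by (auto simp: Bs_def Ss_def)
  have VU: "V = Bs \<union> Ss" "Bs \<inter> Ss = {}" by (auto simp: Bs_def Ss_def)
  have sd: "s = (\<Sum>y\<in>Bs. (cmod (f y))\<^sup>2)" "r = (\<Sum>y\<in>Ss. (cmod (f y))\<^sup>2)"
    by (simp_all add: s_def r_def Bs_def Ss_def)
  have sum_split: "(\<Sum>y\<in>V. g y) = (\<Sum>y\<in>Bs. g y) + (\<Sum>y\<in>Ss. g y)" for g :: "'v \<Rightarrow> real"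
    using fin VU by (simp add: sum.union_disjoint)
  show "Sk 2 V f = s + r" unfolding Sk_def sd by (rule sum_split)
  show s0: "0 \<le> s" "0 \<le> r" unfolding sd by (auto intro: sum_nonneg)
  have "(\<Sum>y\<in>Bs. cmod (f y) ^ 4) \<le> (\<Sum>y\<in>Bs. (cmod (f y))\<^sup>2 * s)"
  proof (rule sum_mono)
    fix y assume y: "y \<in> Bs"
    have "(cmod (f y))\<^sup>2 \<le> s" unfolding sd using fin(1) y by (intro member_le_sum) auto
    then have "(cmod (f y))\<^sup>2 * (cmod (f y))\<^sup>2 \<le> (cmod (f y))\<^sup>2 * s" by (intro mult_left_mono) auto
    then show "cmod (f y) ^ 4 \<le> (cmod (f y))\<^sup>2 * s" by (simp only: pow4)
  qed
  also have "\<dots> = s\<^sup>2" by (simp add: sd sum_distrib_right[symmetric] power2_eq_square)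
  finally have 1: "(\<Sum>y\<in>Bs. cmod (f y) ^ 4) \<le> s\<^sup>2" .
  have "(\<Sum>y\<in>Ss. cmod (f y) ^ 4) \<le> (\<Sum>y\<in>Ss. T * (cmod (f y))\<^sup>2)"
  proof (rule sum_mono)
    fix y assume y: "y \<in> Ss"
    then have "(cmod (f y))\<^sup>2 \<le> T" by (simp add: Ss_def)
    then have "(cmod (f y))\<^sup>2 * (cmod (f y))\<^sup>2 \<le> T * (cmod (f y))\<^sup>2" by (intro mult_right_mono) auto
    then show "cmod (f y) ^ 4 \<le> T * (cmod (f y))\<^sup>2" by (simp only: pow4)
  qed
  also have "\<dots> = T * r" by (simp add: sd sum_distrib_left)
  finally have 2: "(\<Sum>y\<in>Ss. cmod (f y) ^ 4) \<le> T * r" .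
  show "Sk 4 V f \<le> s\<^sup>2 + T * r" unfolding Sk_def sum_split using 1 2 by linarith
  have "T * real (card Bs) = (\<Sum>y\<in>Bs. T)" by simp
  also have "\<dots> \<le> s" unfolding sd by (rule sum_mono) (simp add: Bs_def less_imp_le)
  finally show "T * real (card {y\<in>V. T < (cmod (f y))\<^sup>2}) \<le> s" by (simp add: Bs_def)
  show "\<forall>y\<in>V. (cmod (f y))\<^sup>2 \<le> Sk 2 V f" unfolding Sk_def using V by (auto intro: member_le_sum)
qed




lemma ln_add_le: "(x::real) > 0 \<Longrightarrow> y \<ge> 0 \<Longrightarrow> ln (x + y) \<le> ln x + y / x"
proof -
  assume x: "x > 0" and y: "y \<ge> 0"
  have yx: "y / x \<ge> 0" using x y by simp
  have e: "x + y = x * (1 + y / x)" using x by (simp add: field_simps)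
  have "ln (x + y) = ln x + ln (1 + y / x)" unfolding e using x yx by (subst ln_mult) auto
  also have "ln (1 + y / x) \<le> y / x" using yx by (rule ln_add_one_self_le_self)
  finally show ?thesis by simp
qed

lemma one_plus_pow_le: "N > 0 \<Longrightarrow> (1 + 1 / real N) ^ N \<le> exp 1"
proof -
  assume N: "N > 0"
  have "(1 + 1 / real N) ^ N \<le> exp (1 / real N) ^ N"
    by (intro power_mono) (auto simp: add.commute exp_ge_add_one_self_aux)
  also have "\<dots> = exp 1" using N by (simp add: exp_of_nat_mult[symmetric])
  finally show ?thesis .
qed

lemma final_ineq:
  fixes n P Q ne a b B \<beta> \<epsilon> \<delta> :: real and N :: nat
  assumes nN: "n = real N" and n32: "n \<ge> 32" and P1: "1 \<le> P" and Pn: "P \<le> n" and e: "\<epsilon> > 0"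
    and lnn: "\<epsilon> * ln n \<le> ne" and ne1': "ne \<ge> 1" and Q: "Q = P * ne" and a: "0 < a" and ab: "a < b" and bB: "b \<le> B"
    and \<beta>: "\<beta> \<ge> 0" and P: "n * \<delta> = P"
  defines "R \<equiv> (b - a) * n + 5 * B * P"
  defines "t \<equiv> n / R"
  defines "M \<equiv> 2 * B * n"
  defines "la \<equiv> ln (n * t * M)"
  defines "k \<equiv> 2 * B * P"
  defines "C \<equiv> \<beta> * B^3 + 6 * B + 6 * B\<^sup>2 / \<epsilon> + 32"
  shows "la \<ge> 0" "exp (\<beta> * a\<^sup>2 * n * (1 + \<delta>)) * exp (la * k + t * R) * (pi / t + exp (-la) * pi * M) ^ N
      \<le> exp (n * L \<beta> a b + C * Q / (b - a))"
proof -
  have B: "B > 0" using a ab bB by linarith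
  have ba: "b - a > 0" "b - a \<le> B" using a ab bB by auto
  have R5: "R \<ge> 5 * B * P" using ba n32 by (simp add: R_def)
  have "5 * B * P > 0" using B P1 by simp
  then have Rpos: "R > 0" using R5 by linarith
  have R6: "R \<le> 6 * B * n"
  proof -
    have "(b - a) * n \<le> B * n" using ba n32 by (intro mult_right_mono) auto
    moreover have "5 * B * P \<le> 5 * B * n" using B Pn by simp
    ultimately show ?thesis unfolding R_def by linarith
  qed
  have tpos: "t > 0" using Rpos n32 by (simp add: t_def)
  have tR: "t * R = n" using Rpos by (simp add: t_def)
  have ntM: "n * t * M = 2 * B * n^3 / R" by (simp add: t_def M_def power3_eq_cube)
  have ntM1: "n * t * M \<ge> 1"
  proof -
    have "2 * B * n^3 / R \<ge> 2 * B * n^3 / (6 * B * n)"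
      using Rpos R6 B n32 by (intro divide_left_mono) auto
    also have "2 * B * n^3 / (6 * B * n) = n^2 / 3" using B n32 by (simp add: power2_eq_square power3_eq_cube field_simps)
    also have "n^2 / 3 \<ge> 1"
    proof -
      have "32 * 32 \<le> n * n" using mult_mono[OF n32 n32] n32 by simp
      then show ?thesis by (simp add: power2_eq_square)
    qed
    finally show ?thesis using ntM by simp
  qed
  show la0: "la \<ge> 0" using ntM1 by (simp add: la_def)
  have ntMn3: "n * t * M \<le> n^3"
  proof -
    have "2 * B * n^3 / R \<le> 2 * B * n^3 / (5 * B * P)"
      using Rpos R5 B n32 P1 by (intro divide_left_mono) auto
    also have "\<dots> \<le> n^3"
    proof -
      have "2 * B \<le> 5 * B * P" using B P1 mult_left_mono[OF P1, of "5*B"] by simp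
      then have "n^3 * (2 * B) \<le> n^3 * (5 * B * P)" using n32 by (intro mult_left_mono) auto
      then have "2 * B * n^3 \<le> n^3 * (5 * B * P)" by (simp add: mult.commute)
      then show ?thesis using B P1 by (simp add: divide_le_eq)
    qed
    finally show ?thesis using ntM by simp
  qed
  have la3: "la \<le> 3 * ln n"
  proof -
    have "la \<le> ln (n^3)" unfolding la_def using ntM1 ntMn3 n32 by (subst ln_le_cancel_iff) auto
    also have "\<dots> = 3 * ln n" using n32 by (simp add: ln_realpow)
    finally show ?thesis .
  qed
  have ce: "exp (-la) = 1 / (n * t * M)" using ntM1 by (simp add: la_def exp_minus inverse_eq_divide)
  have base: "pi / t + exp (-la) * pi * M = (pi / t) * (1 + 1 / n)"
    unfolding ce using tpos n32 B by (simp add: M_def field_simps)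
  have Npos: "N > 0" using n32 nN by auto
  have "(pi / t + exp (-la) * pi * M) ^ N = (pi / t) ^ N * (1 + 1 / real N) ^ N"
    unfolding base nN by (rule power_mult_distrib)
  also have "\<dots> \<le> (pi / t) ^ N * exp 1"
    using one_plus_pow_le[OF Npos] tpos by (intro mult_left_mono) auto
  also have "(pi / t) ^ N = exp (n * ln (pi * (R / n)))"
  proof -
    have pos: "pi * (R / n) > 0" using Rpos n32 by simp
    have "pi / t = pi * (R / n)" by (simp add: t_def)
    then have "(pi / t) ^ N = exp (ln (pi * (R / n))) ^ N" using pos by simp
    also have "\<dots> = exp (n * ln (pi * (R / n)))" unfolding nN by (rule exp_of_nat_mult[symmetric])
    finally show ?thesis .
  qed
  finally have pw: "(pi / t + exp (-la) * pi * M) ^ N \<le> exp (n * ln (pi * (R / n)) + 1)"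
    by (simp add: exp_add)
  have RN: "R / n = (b - a) + 5 * B * P / n" using n32 by (simp add: R_def field_simps)
  have lnR: "n * ln (pi * (R / n)) \<le> n * ln pi + n * ln (b - a) + 5 * B * P / (b - a)"
  proof -
    have "ln (R / n) \<le> ln (b - a) + (5 * B * P / n) / (b - a)"
      unfolding RN using ba B P1 n32 by (intro ln_add_le) auto
    then have "n * ln (R / n) \<le> n * (ln (b - a) + (5 * B * P / n) / (b - a))"
      using n32 by (intro mult_left_mono) auto
    also have "n * (ln (b - a) + (5 * B * P / n) / (b - a)) = n * ln (b - a) + 5 * B * P / (b - a)"
      using n32 by (simp add: distrib_left)
    finally have "n * ln (R / n) \<le> n * ln (b - a) + 5 * B * P / (b - a)" .
    moreover have "ln (pi * (R / n)) = ln pi + ln (R / n)" using Rpos n32 by (intro ln_mult_pos) auto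
    ultimately show ?thesis by (simp add: ring_distribs)
  qed
  define X where "X = Q / (b - a)"
  have ne1: "ne \<ge> 0" using ne1' by linarith
  have lnn': "ln n \<le> ne / \<epsilon>" using lnn e by (simp add: field_simps mult.commute)
  have QP: "Q \<ge> P" using Q mult_left_mono[OF ne1', of P] P1 by simp
  have Q1: "Q \<ge> 1" using QP P1 by linarith
  have QX: "Q \<le> B * X"
  proof -
    have "B / (b - a) \<ge> 1" using ba by simp
    then have "Q * 1 \<le> Q * (B / (b - a))" using Q1 by (intro mult_left_mono) auto
    then show ?thesis unfolding X_def by (simp add: mult.commute)
  qed
  have X0: "X \<ge> 0" unfolding X_def using ba Q1 by simp
  have t1: "\<beta> * a\<^sup>2 * P \<le> \<beta> * B^3 * X"
  proof -
    have "a\<^sup>2 \<le> B\<^sup>2" using a ab bB by (intro power_mono) auto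
    then have "a\<^sup>2 * P \<le> B\<^sup>2 * Q" using QP P1 by (intro mult_mono) auto
    also have "\<dots> \<le> B\<^sup>2 * (B * X)" using QX by (intro mult_left_mono) auto
    finally show ?thesis using \<beta> by (simp add: mult_left_mono power3_eq_cube power2_eq_square mult.assoc)
  qed
  have t2: "la * k \<le> 6 * B\<^sup>2 / \<epsilon> * X"
  proof -
    have "la * k \<le> 3 * ln n * k" using la3 B P1 by (intro mult_right_mono) (auto simp: k_def)
    also have "\<dots> \<le> 3 * (ne / \<epsilon>) * k" using lnn' B P1 by (intro mult_right_mono mult_left_mono) (auto simp: k_def)
    also have "\<dots> = 6 * B / \<epsilon> * Q" by (simp add: k_def Q)
    also have "\<dots> \<le> 6 * B / \<epsilon> * (B * X)" using QX B e by (intro mult_left_mono) auto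
    finally show ?thesis by (simp add: power2_eq_square)
  qed
  have t3: "1 \<le> B * X" using Q1 QX by linarith
  have t4: "5 * B * P / (b - a) \<le> 5 * B * X"
    unfolding X_def using QP ba B by (simp add: divide_right_mono)
  have sumle: "\<beta> * a\<^sup>2 * P + la * k + 1 + 5 * B * P / (b - a) \<le> C * X"
  proof -
    have "\<beta> * a\<^sup>2 * P + la * k + 1 + 5 * B * P / (b - a) \<le> (\<beta> * B^3 + 6 * B\<^sup>2 / \<epsilon> + 6 * B) * X"
      using t1 t2 t3 t4 by (simp add: ring_distribs)
    also have "\<dots> \<le> C * X" using X0 by (intro mult_right_mono) (auto simp: C_def)
    finally show ?thesis .
  qed
  have e1: "\<beta> * a\<^sup>2 * n * (1 + \<delta>) = \<beta> * a\<^sup>2 * n + \<beta> * a\<^sup>2 * P"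
    using P by (simp add: ring_distribs mult.assoc)
  have "exp (\<beta> * a\<^sup>2 * n * (1 + \<delta>)) * exp (la * k + t * R) * (pi / t + exp (-la) * pi * M) ^ N
      \<le> exp (\<beta> * a\<^sup>2 * n * (1 + \<delta>)) * exp (la * k + t * R) * exp (n * ln (pi * (R / n)) + 1)"
    by (intro mult_left_mono pw) auto
  also have "\<dots> = exp (\<beta> * a\<^sup>2 * n * (1 + \<delta>) + (la * k + t * R) + (n * ln (pi * (R / n)) + 1))"
    by (simp add: exp_add)
  also have "\<dots> \<le> exp (n * L \<beta> a b + C * Q / (b - a))"
  proof (subst exp_le_cancel_iff)
    have nl: "n * L \<beta> a b = \<beta> * a\<^sup>2 * n + n * ln (b - a) + n * ln pi + n"
      by (simp add: L_def algebra_simps)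
    have cx: "C * X = C * Q / (b - a)" by (simp add: X_def)
    show "\<beta> * a\<^sup>2 * n * (1 + \<delta>) + (la * k + t * R) + (n * ln (pi * (R / n)) + 1) \<le> n * L \<beta> a b + C * Q / (b - a)"
      using e1 tR lnR sumle nl cx by linarith
  qed
  finally show "exp (\<beta> * a\<^sup>2 * n * (1 + \<delta>)) * exp (la * k + t * R) * (pi / t + exp (-la) * pi * M) ^ N
      \<le> exp (n * L \<beta> a b + C * Q / (b - a))" .
qed



lemma sq_lower:
  fixes s A u :: real
  assumes s: "s \<ge> 0" and A: "A > 0" and u: "u \<ge> 0" and h: "s\<^sup>2 \<ge> A\<^sup>2 - u * A"
  shows "s \<ge> A - u"
proof (cases "A - u \<le> 0")
  case True then show ?thesis using s by linarith
next
  case False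
  then have uA: "u \<le> A" by linarith
  have "(A - u)\<^sup>2 = A\<^sup>2 - u * A - u * (A - u)" by (simp add: power2_eq_square algebra_simps)
  also have "\<dots> \<le> A\<^sup>2 - u * A" using u uA by simp
  also have "\<dots> \<le> s\<^sup>2" by (rule h)
  finally show ?thesis using s by (rule power2_le_imp_le)
qed

lemma gamma_alg:
  fixes n \<delta> T P e2 a b B S2 S4 s r :: real
  assumes d0: "0 \<le> \<delta>" and d1: "\<delta> \<le> 1/2" and n: "n > 0" and T: "T > 0"
    and nd: "n * \<delta> = P" and TP: "T * P = n" and Te: "T * e2 \<le> P" and ae: "1 \<le> a * e2"
    and a: "0 < a" and ab: "a < b" and bB: "b \<le> B"
    and S2: "S2 = s + r" and S4: "S4 \<le> s\<^sup>2 + T * r" and s: "s \<ge> 0" and r: "r \<ge> 0"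
    and S4l: "a\<^sup>2 * n\<^sup>2 * (1 - \<delta>) \<le> S4" and S2u: "S2 \<le> b * n * (1 + \<delta>)"
  shows "r \<le> (b - a) * n + 5 * B * P"
proof -
  define A where "A = a * n * (1 - \<delta>)"
  define D where "D = T * S2"
  have A0: "A > 0" using a n d1 by (simp add: A_def)
  have S20: "S2 \<ge> 0" using S2 s r by simp
  have D0: "D \<ge> 0" using T S20 by (simp add: D_def)
  have "A\<^sup>2 = a\<^sup>2 * n\<^sup>2 * ((1 - \<delta>) * (1 - \<delta>))" by (simp add: A_def power2_eq_square)
  also have "\<dots> \<le> a\<^sup>2 * n\<^sup>2 * (1 - \<delta>)"
  proof (intro mult_left_mono)
    have "(1 - \<delta>) * (1 - \<delta>) \<le> 1 * (1 - \<delta>)" by (rule mult_right_mono) (use d0 d1 in auto)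
    then show "(1 - \<delta>) * (1 - \<delta>) \<le> 1 - \<delta>" by simp
  qed auto
  finally have A2: "A\<^sup>2 \<le> a\<^sup>2 * n\<^sup>2 * (1 - \<delta>)" .
  have Tr: "T * r \<le> T * S2" using T S2 s by (intro mult_left_mono) auto
  have DA: "(D / A) * A = D" using A0 by simp
  have h1: "s\<^sup>2 \<ge> A\<^sup>2 - (D / A) * A" using DA D_def A2 S4l S4 Tr by linarith
  have h2: "s \<ge> A - D / A" using sq_lower[OF s A0 _ h1] D0 A0 by simp
  have e2: "e2 > 0"
  proof -
    have "0 < a * e2" using ae by linarith
    then show ?thesis using a by (simp add: zero_less_mult_iff)
  qed
  have X1: "b * (1 + \<delta>) \<le> B * (3/2)" using a ab bB d0 d1 by (intro mult_mono) auto
  have X2: "1 * (1/2) \<le> (a * e2) * (1 - \<delta>)" using ae d0 d1 by (intro mult_mono) auto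
  have TnB: "T * n * B \<ge> 0" using T n a ab bB by simp
  have "T * S2 \<le> T * (b * n * (1 + \<delta>))" using T S2u by (intro mult_left_mono) auto
  also have "\<dots> = (T * n) * (b * (1 + \<delta>))" by (simp add: algebra_simps)
  also have "\<dots> \<le> (T * n) * (B * (3/2))" using T n X1 by (intro mult_left_mono) auto
  also have "\<dots> = 3 * (T * n * B) * (1 * (1/2))" by (simp add: algebra_simps)
  also have "\<dots> \<le> 3 * (T * n * B) * ((a * e2) * (1 - \<delta>))" using TnB X2 by (intro mult_left_mono) auto
  also have "\<dots> = (3 * (T * B * e2)) * A" by (simp add: A_def algebra_simps)
  finally have "D \<le> (3 * (T * B * e2)) * A" by (simp add: D_def)
  then have "D / A \<le> 3 * (T * B * e2)" using A0 by (simp add: pos_divide_le_eq)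
  also have "\<dots> \<le> 3 * (B * P)"
  proof -
    have "T * B * e2 = B * (T * e2)" by simp
    also have "\<dots> \<le> B * P" using Te a ab bB by (intro mult_left_mono) auto
    finally show ?thesis by simp
  qed
  finally have h3: "D / A \<le> 3 * (B * P)" .
  have P0: "P \<ge> 0" using nd n d0 by (metis mult_nonneg_nonneg less_imp_le)
  have "(a + b) * P \<le> (2 * B) * P"
    using a ab bB P0 by (intro mult_right_mono) auto
  then have g1: "(a + b) * P \<le> 2 * (B * P)" by simp
  have g2: "b * n * (1 + \<delta>) - A = (b - a) * n + (a + b) * P"
    unfolding nd[symmetric] by (simp add: A_def algebra_simps)
  have g3: "5 * B * P = 5 * (B * P)" by simp
  show ?thesis unfolding g3 using h2 h3 S2 S2u g1 g2 by linarith
qed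



lemma powr_facts:
  fixes n \<epsilon> :: real
  assumes n32: "n \<ge> 32" and e: "0 < \<epsilon>" "\<epsilon> < 1/5"
  shows "n powr (-1/5) \<le> 1/2" "0 \<le> n powr (-1/5)" "n * n powr (-1/5) = n powr (4/5)"
    "n powr (1/5) * n powr (4/5) = n" "n powr (1/5) * n powr (2 * \<epsilon> / 5) \<le> n powr (4/5)"
    "1 \<le> n powr (4/5)" "n powr (4/5) \<le> n" "\<epsilon> * ln n \<le> n powr \<epsilon>" "1 \<le> n powr \<epsilon>"
    "n powr (4/5 + \<epsilon>) = n powr (4/5) * n powr \<epsilon>"
    "n powr (-2 * \<epsilon> / 5) = 1 / n powr (2 * \<epsilon> / 5)" "0 < n powr (1/5)"
proof -
  have n0: "n > 0" using n32 by simp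
  have n1: "n \<ge> 1" using n32 by simp
  have "(2::real) = 32 powr (1/5)"
  proof -
    have "(32::real) = 2 powr 5" by simp
    then have "32 powr (1/5) = (2 powr 5) powr (1/(5::real))" by simp
    also have "\<dots> = 2" by (simp add: powr_powr)
    finally show ?thesis by simp
  qed
  also have "32 powr (1/5) \<le> n powr (1/5)" using n32 by (intro powr_mono2) auto
  finally have n15: "2 \<le> n powr (1/5)" .
  have "n powr (-1/5) = 1 / n powr (1/5)" using n0 by (simp add: powr_minus_divide)
  also have "\<dots> \<le> 1/2" using n15 by (simp add: divide_le_eq)
  finally show "n powr (-1/5) \<le> 1/2" .
  show "0 \<le> n powr (-1/5)" by simp
  show "n * n powr (-1/5) = n powr (4/5)"
  proof -
    have "n * n powr (-1/5) = n powr 1 * n powr (-1/5)" using n0 by simp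
    also have "\<dots> = n powr (1 + -1/5)" by (rule powr_add[symmetric])
    also have "(1 + -1/5::real) = 4/5" by simp
    finally show ?thesis .
  qed
  show "n powr (1/5) * n powr (4/5) = n"
  proof -
    have "n powr (1/5) * n powr (4/5) = n powr (1/5 + 4/5)" by (rule powr_add[symmetric])
    also have "(1/5 + 4/5 :: real) = 1" by simp
    also have "n powr 1 = n" using n0 by simp
    finally show ?thesis .
  qed
  show "n powr (1/5) * n powr (2 * \<epsilon> / 5) \<le> n powr (4/5)"
  proof -
    have "n powr (1/5) * n powr (2 * \<epsilon> / 5) = n powr (1/5 + 2 * \<epsilon> / 5)" by (rule powr_add[symmetric])
    also have "\<dots> \<le> n powr (4/5)" using n1 e by (intro powr_mono) auto
    finally show ?thesis .
  qed
  show "1 \<le> n powr (4/5)" using n1 by (rule ge_one_powr_ge_zero) simp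
  show "n powr (4/5) \<le> n"
  proof -
    have "n powr (4/5) \<le> n powr 1" using n1 by (intro powr_mono) auto
    then show ?thesis using n0 by simp
  qed
  show "\<epsilon> * ln n \<le> n powr \<epsilon>"
  proof -
    have "ln (n powr \<epsilon>) = \<epsilon> * ln n" using n0 by (simp add: ln_powr)
    moreover have "ln (n powr \<epsilon>) \<le> n powr \<epsilon> - 1" using n0 by (intro ln_le_minus_one) simp
    ultimately show ?thesis by simp
  qed
  show "1 \<le> n powr \<epsilon>" using n1 e by (intro ge_one_powr_ge_zero) auto
  show "n powr (4/5 + \<epsilon>) = n powr (4/5) * n powr \<epsilon>" by (rule powr_add)
  show "n powr (-2 * \<epsilon> / 5) = 1 / n powr (2 * \<epsilon> / 5)"
  proof -
    have "-2 * \<epsilon> / 5 = - (2 * \<epsilon> / 5)" by simp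
    then show ?thesis by (simp only: powr_minus_divide)
  qed
  show "0 < n powr (1/5)" using n0 by simp
qed


theorem lemma3p2:
  fixes \<beta> B \<epsilon> :: real
  assumes "\<beta> \<ge> 0" and "B > 0" and "0 < \<epsilon>" and "\<epsilon> < 1/5"
  shows "\<exists>C>0. \<forall>V :: nat set. \<forall>a b :: real.
           finite V \<and> real (card V) \<ge> C \<and>
           real (card V) powr (-2 * \<epsilon> / 5) < a \<and> a < b \<and> b \<le> B \<longrightarrow>
           (\<integral>\<^sup>+ f \<in> Gamma V a b. ennreal (exp (\<beta> / real (card V) * Sk 4 V f)) \<partial>lebC V)
             \<le> ennreal (exp (real (card V) * L \<beta> a b
                  + C * real (card V) powr (4/5 + \<epsilon>) / (b - a)))"
proof -
  note \<beta> = assms(1) and B0 = assms(2) and e = assms(3,4)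
  define C where "C = \<beta> * B^3 + 6 * B + 6 * B\<^sup>2 / \<epsilon> + 32"
  have C32: "C \<ge> 32" using \<beta> B0 e by (simp add: C_def)
  have "\<forall>V :: nat set. \<forall>a b :: real.
           finite V \<and> real (card V) \<ge> C \<and>
           real (card V) powr (-2 * \<epsilon> / 5) < a \<and> a < b \<and> b \<le> B \<longrightarrow>
           (\<integral>\<^sup>+ f \<in> Gamma V a b. ennreal (exp (\<beta> / real (card V) * Sk 4 V f)) \<partial>lebC V)
             \<le> ennreal (exp (real (card V) * L \<beta> a b
                  + C * real (card V) powr (4/5 + \<epsilon>) / (b - a)))"
  proof (intro allI impI)
    fix V :: "nat set" and a b :: real
    assume H: "finite V \<and> real (card V) \<ge> C \<and>
           real (card V) powr (-2 * \<epsilon> / 5) < a \<and> a < b \<and> b \<le> B"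
    define N where "N = card V"
    define n where "n = real N"
    have V: "finite V" and nC: "n \<ge> C" and an: "n powr (-2 * \<epsilon> / 5) < a" and ab: "a < b" and bB: "b \<le> B"
      using H by (auto simp: n_def N_def)
    have n32: "n \<ge> 32" using nC C32 by linarith
    have n0: "n > 0" using n32 by linarith
    define \<delta> where "\<delta> = n powr (-1/5)"
    define T where "T = n powr (1/5)"
    define P where "P = n powr (4/5)"
    define e2 where "e2 = n powr (2 * \<epsilon> / 5)"
    define ne where "ne = n powr \<epsilon>"
    define Q where "Q = n powr (4/5 + \<epsilon>)"
    note pf = powr_facts[OF n32 e, folded \<delta>_def T_def P_def e2_def ne_def Q_def]
    have a0: "a > 0" using an by (smt (verit) powr_ge_zero)
    have ae: "1 \<le> a * e2"
    proof -
      have "1 / e2 < a" using an pf(11) by simp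
      moreover have "e2 > 0" using n0 by (simp add: e2_def)
      ultimately show ?thesis by (simp add: divide_less_eq less_imp_le mult.commute)
    qed
    define R where "R = (b - a) * n + 5 * B * P"
    define t where "t = n / R"
    define M where "M = 2 * B * n"
    define la where "la = ln (n * t * M)"
    define k where "k = 2 * B * P"
    note FI = final_ineq[OF n_def n32 pf(6) pf(7) e(1) pf(8) pf(9) pf(10) a0 ab bB \<beta> pf(3),
      folded R_def, folded t_def, folded M_def, folded la_def, folded k_def, folded C_def]
    have Rpos: "R > 0"
    proof -
      have "5 * B * P > 0" using B0 pf(6) by simp
      moreover have "(b - a) * n > 0" using ab n0 by simp
      ultimately show ?thesis by (simp add: R_def)
    qed
    have tpos: "t > 0" using Rpos n0 by (simp add: t_def)
    have M0: "M \<ge> 0" using B0 n0 by (simp add: M_def)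
    define K where "K = exp (\<beta> * a\<^sup>2 * n * (1 + \<delta>)) * exp (la * k + t * R)"
    define c where "c = exp (-la)"
    have pt: "ennreal (exp (\<beta> / n * Sk 4 V f)) * indicator (Gamma V a b) f
              \<le> ennreal (K * (\<Prod>y\<in>V. wt t c M (f y)))" for f
    proof (cases "f \<in> Gamma V a b")
      case False then show ?thesis by simp
    next
      case True
      have G: "a\<^sup>2 * n\<^sup>2 * (1 - \<delta>) \<le> Sk 4 V f" "Sk 4 V f \<le> a\<^sup>2 * n\<^sup>2 * (1 + \<delta>)"
        "b * n * (1 - \<delta>) \<le> Sk 2 V f" "Sk 2 V f \<le> b * n * (1 + \<delta>)"
        using True unfolding Gamma_def Let_def n_def N_def \<delta>_def by auto
      define s where "s = (\<Sum>y\<in>{y\<in>V. T < (cmod (f y))\<^sup>2}. (cmod (f y))\<^sup>2)"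
      define r where "r = (\<Sum>y\<in>{y\<in>V. \<not> T < (cmod (f y))\<^sup>2}. (cmod (f y))\<^sup>2)"
      have T0: "T > 0" using pf(12) by simp
      note sf = split_facts[OF V T0, of f, folded s_def r_def]
      have rR: "r \<le> R" unfolding R_def
        by (rule gamma_alg[OF pf(2) pf(1) n0 T0 pf(3) pf(4) pf(5) ae a0 ab bB sf(1) sf(2) sf(4) sf(5) G(1) G(4)])
      have S2M: "Sk 2 V f \<le> M"
      proof -
        have "b * (1 + \<delta>) \<le> B * 2" using a0 ab bB pf(1,2) by (intro mult_mono) auto
        then have "n * (b * (1 + \<delta>)) \<le> n * (B * 2)" using n0 by (intro mult_left_mono) auto
        then show ?thesis using G(4) by (simp add: M_def algebra_simps)
      qed
      have Mb: "\<forall>y\<in>V. (cmod (f y))\<^sup>2 \<le> M" using sf(6) S2M by auto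
      have kb: "real (card {y\<in>V. T < (cmod (f y))\<^sup>2}) \<le> k"
      proof -
        have "T * real (card {y\<in>V. T < (cmod (f y))\<^sup>2}) \<le> T * k"
        proof -
          have "T * k = M" using pf(4) by (simp add: k_def M_def T_def P_def algebra_simps)
          then show ?thesis using sf(3) sf(1) sf(5) S2M by linarith
        qed
        then show ?thesis using T0 by simp
      qed
      have WL: "exp (- la * k - t * R) \<le> (\<Prod>y\<in>V. wt t c M (f y))"
        unfolding c_def by (rule weight_lower[OF V _ FI(1) Mb kb]) (use tpos rR in \<open>simp_all add: r_def\<close>)
      have "\<beta> / n * Sk 4 V f \<le> \<beta> / n * (a\<^sup>2 * n\<^sup>2 * (1 + \<delta>))"
        using G(2) \<beta> n0 by (intro mult_left_mono) auto
      also have "\<dots> = \<beta> * a\<^sup>2 * n * (1 + \<delta>)" using n0 by (simp add: power2_eq_square)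
      finally have "exp (\<beta> / n * Sk 4 V f) \<le> exp (\<beta> * a\<^sup>2 * n * (1 + \<delta>))" by simp
      also have "\<dots> = K * exp (- la * k - t * R)"
        by (simp add: K_def mult.assoc exp_add[symmetric])
      also have "\<dots> \<le> K * (\<Prod>y\<in>V. wt t c M (f y))"
        using WL by (intro mult_left_mono) (simp_all add: K_def)
      finally show ?thesis using True by (simp add: ennreal_leI)
    qed
    have "(\<integral>\<^sup>+ f \<in> Gamma V a b. ennreal (exp (\<beta> / real (card V) * Sk 4 V f)) \<partial>lebC V)
        \<le> (\<integral>\<^sup>+ f. ennreal K * (\<Prod>y\<in>V. ennreal (wt t c M (f y))) \<partial>lebC V)"
    proof (rule nn_integral_mono)
      fix f
      have "ennreal (K * (\<Prod>y\<in>V. wt t c M (f y))) = ennreal K * (\<Prod>y\<in>V. ennreal (wt t c M (f y)))"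
        by (simp add: ennreal_mult prod_ennreal prod_nonneg wt_nonneg c_def K_def)
      then show "ennreal (exp (\<beta> / real (card V) * Sk 4 V f)) * indicator (Gamma V a b) f
          \<le> ennreal K * (\<Prod>y\<in>V. ennreal (wt t c M (f y)))"
        using pt[of f] by (simp add: n_def N_def)
    qed
    also have "\<dots> = ennreal K * (\<integral>\<^sup>+ f. (\<Prod>y\<in>V. ennreal (wt t c M (f y))) \<partial>lebC V)"
      by (rule nn_integral_cmult) (simp add: lebC_def)
    also have "\<dots> = ennreal K * ennreal ((pi / t + c * pi * M) ^ card V)"
      by (subst prod_integral[OF V tpos _ M0]) (simp_all add: c_def)
    also have "\<dots> = ennreal (K * (pi / t + c * pi * M) ^ N)"
      by (simp add: ennreal_mult K_def N_def tpos M0 c_def less_imp_le)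
    also have "\<dots> \<le> ennreal (exp (n * L \<beta> a b + C * Q / (b - a)))"
      using FI(2) by (intro ennreal_leI) (simp add: K_def c_def mult.assoc mult.commute mult.left_commute)
    finally show "(\<integral>\<^sup>+ f \<in> Gamma V a b. ennreal (exp (\<beta> / real (card V) * Sk 4 V f)) \<partial>lebC V)
             \<le> ennreal (exp (real (card V) * L \<beta> a b
                  + C * real (card V) powr (4/5 + \<epsilon>) / (b - a)))"
      by (simp add: n_def N_def Q_def)
  qed
  moreover have "C > 0" using C32 by linarith
  ultimately show ?thesis by blast
qed

end
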